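(* Let $G$ be a group with identity $e$, $A$ a finite set with $|A|\ge2$, and $S\subseteq G$ a finite subset with $e\in S$ and $|S|\ge3$. Suppose $(\mathcal P,f)$ generates a local map $\mu:A^S\to A$, with $f$ well-behaved and $|\mathcal P|=|A|$. Then $\mathrm{mms}(\mu)=S\setminus\{s\}$ for some $s\in S\setminus\{e\}$, or $\mathrm{mms}(\mu)=S$.
   Context: $A^S$ is the set of functions $S\to A$. A local map $\mu:A^S\to A$ defines the cellular automaton $\tau:A^G\to A^G$, $\tau(x)(g)=\mu((g^{-1}\cdot x)|_S)$, where $(g\cdot x)(h)=x(g^{-1}h)$. A finite $T\subseteq G$ is a memory set of $\tau$ if some local map $A^T\to A$ defines $\tau$; $\mathrm{mms}(\mu)$ is the intersection of all memory sets of the cellular automaton defined by $\mu$. The pair $(\mathcal P,f)$ generates $\mu$ if $\mathcal P=\{z\in A^S:\mu(z)\neq z(e)\}$ and $f:\mathcal P\to A$ is the restriction of $\mu$ to $\mathcal P$. The function $f$ is well-behaved if for all $p,q\in\mathcal P$: $p(e)=q(e)$ if and only if $f(p)=f(q)$. *)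

theory Defs
  imports "HOL-Library.FuncSet" "HOL-Library.Cardinality"
begin

text \<open>The group G is a type of class group_add (written additively:
  identity 0, product g + h, inverse -g; commutativity is NOT assumed).
  An element of A^S is a function 'g => 'a that is undefined outside S
  (extensional functions, PiE S UNIV); x|_S is restrict x S.\<close>

definition shift :: "'g::group_add \<Rightarrow> ('g \<Rightarrow> 'a) \<Rightarrow> ('g \<Rightarrow> 'a)" where
  "shift g x = (\<lambda>h. x (- g + h))"

definition ca :: "'g::group_add set \<Rightarrow> (('g \<Rightarrow> 'a) \<Rightarrow> 'a) \<Rightarrow> ('g \<Rightarrow> 'a) \<Rightarrow> ('g \<Rightarrow> 'a)" where
  "ca S mu x = (\<lambda>g. mu (restrict (shift (- g) x) S))"

definition memory_set :: "(('g::group_add \<Rightarrow> 'a) \<Rightarrow> ('g \<Rightarrow> 'a)) \<Rightarrow> 'g set \<Rightarrow> bool" where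
  "memory_set tau T \<longleftrightarrow> finite T \<and> (\<exists>nu. tau = ca T nu)"

definition mms :: "'g::group_add set \<Rightarrow> (('g \<Rightarrow> 'a) \<Rightarrow> 'a) \<Rightarrow> 'g set" where
  "mms S mu = \<Inter> {T. memory_set (ca S mu) T}"

definition generates ::
  "'g::group_add set \<Rightarrow> (('g \<Rightarrow> 'a) \<Rightarrow> 'a) \<Rightarrow> ('g \<Rightarrow> 'a) set \<Rightarrow> (('g \<Rightarrow> 'a) \<Rightarrow> 'a) \<Rightarrow> bool" where
  "generates S mu P f \<longleftrightarrow>
     P = {z \<in> S \<rightarrow>\<^sub>E (UNIV :: 'a set). mu z \<noteq> z 0} \<and> (\<forall>p\<in>P. f p = mu p)"

definition well_behaved :: "('g::group_add \<Rightarrow> 'a) set \<Rightarrow> (('g \<Rightarrow> 'a) \<Rightarrow> 'a) \<Rightarrow> bool" where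
  "well_behaved P f \<longleftrightarrow> (\<forall>p\<in>P. \<forall>q\<in>P. p 0 = q 0 \<longleftrightarrow> f p = f q)"

end

theory Submission
  imports Defs
begin

lemma upd_PiE: "s \<in> S \<Longrightarrow> z \<in> S \<rightarrow>\<^sub>E (UNIV::'a set) \<Longrightarrow> z(s := a) \<in> S \<rightarrow>\<^sub>E (UNIV::'a set)"
  using PiE_fun_upd[of a "\<lambda>_. UNIV" s z S] by (simp add: insert_absorb)

lemma ca_at0: "z \<in> S \<rightarrow>\<^sub>E (UNIV::'a set) \<Longrightarrow> ca S mu z 0 = mu z"
  by (simp add: ca_def shift_def)

lemma ess_in_mms:
  fixes S :: "'g::group_add set" and mu :: "('g \<Rightarrow> 'a) \<Rightarrow> 'a"
  assumes "s \<in> S" "z \<in> S \<rightarrow>\<^sub>E (UNIV::'a set)" "mu (z(s := a)) \<noteq> mu z"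
  shows "s \<in> mms S mu"
  unfolding mms_def
proof (rule InterI)
  fix T assume "T \<in> {T. memory_set (ca S mu) T}"
  then obtain nu where nu: "ca S mu = ca T nu" by (auto simp: memory_set_def)
  show "s \<in> T"
  proof (rule ccontr)
    assume "s \<notin> T"
    then have r: "restrict (z(s := a)) T = restrict z T"
      by (auto simp: restrict_def)
    have "mu (z(s := a)) = ca S mu (z(s := a)) 0"
      using ca_at0[OF upd_PiE[OF assms(1,2)]] by simp
    also have "\<dots> = ca T nu (z(s := a)) 0" by (simp add: nu)
    also have "\<dots> = ca T nu z 0"
    proof -
      have sh: "shift 0 x = x" for x :: "'g \<Rightarrow> 'a" by (simp add: shift_def)
      show ?thesis by (simp add: ca_def sh r)
    qed
    also have "\<dots> = ca S mu z 0" by (simp add: nu)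
    also have "\<dots> = mu z" using ca_at0[OF assms(2)] .
    finally show False using assms(3) by simp
  qed
qed

lemma mms_sub: "finite S \<Longrightarrow> mms S mu \<subseteq> S"
  unfolding mms_def memory_set_def by blast

theorem mainTheorem10:
  fixes S :: "'g::group_add set"
    and mu :: "('g \<Rightarrow> 'a::finite) \<Rightarrow> 'a"
    and P :: "('g \<Rightarrow> 'a) set"
    and f :: "('g \<Rightarrow> 'a) \<Rightarrow> 'a"
  assumes "CARD('a) \<ge> 2"
    and "finite S" and "0 \<in> S" and "card S \<ge> 3"
    and "generates S mu P f"
    and "well_behaved P f"
    and "card P = CARD('a)"
  shows "(\<exists>s \<in> S - {0}. mms S mu = S - {s}) \<or> mms S mu = S"
proof -
  define ess where "ess s \<longleftrightarrow> (\<exists>z \<in> S \<rightarrow>\<^sub>E (UNIV::'a set). \<exists>a. mu (z(s := a)) \<noteq> mu z)" for s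
  have Pdef: "P = {z \<in> S \<rightarrow>\<^sub>E (UNIV :: 'a set). mu z \<noteq> z 0}"
    using assms(5) by (simp add: generates_def)
  have finP: "finite P" unfolding Pdef
    by (rule finite_subset[OF _ finite_PiE[OF assms(2)]]) auto
  have E: "s \<in> mms S mu" if "s \<in> S" "ess s" for s
    using that ess_in_mms unfolding ess_def by metis
  have M: "mms S mu \<subseteq> S" using mms_sub[OF assms(2)] .
  obtain c d :: 'a where cd: "c \<noteq> d"
    proof -
    have "\<exists>c d::'a. c \<noteq> d" using card_le_Suc0_iff_eq[of "UNIV::'a set"] assms(1) by auto
    then show ?thesis using that by blast
  qed
  have ess0: "ess 0"
  proof (rule ccontr)
    assume n0: "\<not> ess 0"
    have indep: "mu (z(0 := a)) = mu z" if "z \<in> S \<rightarrow>\<^sub>E UNIV" for z a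
      using n0 that unfolding ess_def by blast
    obtain t1 where t1: "t1 \<in> S" "t1 \<noteq> 0"
      proof -
      have "\<not> S \<subseteq> {0}" using assms(4) card_mono[of "{0}" S] by auto
      then show ?thesis using that by blast
    qed
    obtain t2 where t2: "t2 \<in> S" "t2 \<noteq> 0" "t2 \<noteq> t1"
    proof -
      have "card {0, t1} = 2" using t1 by simp
      then have "\<not> S \<subseteq> {0, t1}" using assms(4) card_mono[of "{0,t1}" S] by auto
      then show ?thesis using that by blast
    qed
    define base where "base o' = restrict (\<lambda>x. case o' of Some a \<Rightarrow> (if x = t1 then a else c)
                                            | None \<Rightarrow> (if x = t2 then d else c)) S" for o'
    define el where "el o' = (base o')(0 := (SOME v. v \<noteq> mu (base o')))" for o'
    have bP: "base o' \<in> S \<rightarrow>\<^sub>E UNIV" for o' unfolding base_def by simp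
    have v: "(SOME v. v \<noteq> mu (base o')) \<noteq> mu (base o')" for o'
      by (rule someI_ex) (metis cd)
    have elP: "el o' \<in> P" for o'
      unfolding Pdef el_def using upd_PiE[OF assms(3) bP] indep[OF bP] v[of o'] by (auto dest: sym)
    have "inj el"
    proof (rule injI)
      fix x y assume h: "el x = el y"
      have "el x t1 = el y t1" "el x t2 = el y t2" using h by auto
      then show "x = y" using t1 t2 cd
        by (cases x; cases y) (auto simp: el_def base_def split: if_splits)
    qed
    then have "card (UNIV :: 'a option set) \<le> card P"
      using card_inj_on_le[of el UNIV P] elP finP by (auto simp: inj_on_def inj_def)
    then show False using assms(7) by (simp add: card_UNIV_option)
  qed
  have uniq: "s = t" if "s \<in> S" "t \<in> S" "\<not> ess s" "\<not> ess t" for s t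
  proof (rule ccontr)
    assume st: "s \<noteq> t"
    have s0: "s \<noteq> 0" "t \<noteq> 0" using ess0 that by auto
    have closed: "p(u := a) \<in> P" if "p \<in> P" "u \<in> S" "\<not> ess u" "u \<noteq> 0" for p u a
    proof -
      have pP: "p \<in> S \<rightarrow>\<^sub>E UNIV" "mu p \<noteq> p 0" using that(1) Pdef by auto
      have "mu (p(u := a)) = mu p" using that(3) pP(1) unfolding ess_def by blast
      then show ?thesis using pP upd_PiE[OF that(2) pP(1)] that(4) Pdef by auto
    qed
    have "P \<noteq> {}" using assms(1,7) by auto
    then obtain p where p: "p \<in> P" by blast
    define F where "F o' = (case o' of Some a \<Rightarrow> p(s := a) | None \<Rightarrow> p(t := (SOME b. b \<noteq> p t)))" for o'
    have b: "(SOME b. b \<noteq> p t) \<noteq> p t" by (rule someI_ex) (metis cd)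
    have FP: "F o' \<in> P" for o'
      using closed[OF p that(1) that(3) s0(1)] closed[OF p that(2) that(4) s0(2)]
      by (cases o') (auto simp: F_def)
    have "inj F"
    proof (rule injI)
      fix x y assume h: "F x = F y"
      have "F x s = F y s" "F x t = F y t" using h by auto
      then show "x = y" using st b
        by (cases x; cases y) (auto simp: F_def)
    qed
    then have "card (UNIV :: 'a option set) \<le> card P"
      using card_inj_on_le[of F UNIV P] FP finP by (auto simp: inj_on_def inj_def)
    then show False using assms(7) by (simp add: card_UNIV_option)
  qed
  show ?thesis
  proof (cases "\<forall>s\<in>S. ess s")
    case True
    then have "mms S mu = S" using E M by blast
    then show ?thesis by simp
  next
    case False
    then obtain s where s: "s \<in> S" "\<not> ess s" by blast
    have s0: "s \<noteq> 0" using s ess0 by auto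
    have "S - {s} \<subseteq> mms S mu" using E uniq s by blast
    then have "mms S mu = S - {s} \<or> mms S mu = S" using M s by blast
    then show ?thesis using s s0 by blast
  qed
qed

end
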